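(* Let $G$ be a finite simple connected graph, and let $h(G)$ denote the number of holes in $G$. Suppose that all the holes in $G$ are pairwise edge-disjoint and that $G$ has at most one non-edge maximal clique. If the clique number $\omega(G)$ satisfies $2\le \omega(G)\le h(G)+1$, then $$k(G)\le h(G)-\omega(G)+3.$$
   Context: A hole of a graph is an induced (chordless) cycle of length at least $4$. A clique is a complete subgraph; a clique is non-edge if it has at least $3$ vertices. $\omega(G)$ is the maximum number of vertices of a clique in $G$. For a digraph $D=(V,A)$, its competition graph $C(D)$ has vertex set $V$, with distinct $x,y$ adjacent iff there is $v\in V$ with $(x,v),(y,v)\in A$. The competition number $k(G)$ is the smallest $k\ge 0$ such that $G$ together with $k$ new isolated vertices is the competition graph of an acyclic digraph. *)

theory Defs
  imports Main
begin

definition simple_graph :: "'a set \<Rightarrow> ('a \<Rightarrow> 'a \<Rightarrow> bool) \<Rightarrow> bool" where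
  "simple_graph V E \<longleftrightarrow> finite V \<and>
     (\<forall>x y. E x y \<longrightarrow> x \<in> V \<and> y \<in> V \<and> x \<noteq> y \<and> E y x)"

definition connected_graph :: "'a set \<Rightarrow> ('a \<Rightarrow> 'a \<Rightarrow> bool) \<Rightarrow> bool" where
  "connected_graph V E \<longleftrightarrow> V \<noteq> {} \<and> (\<forall>x\<in>V. \<forall>y\<in>V. E\<^sup>*\<^sup>* x y)"

text \<open>A hole: the vertex set of an induced (chordless) cycle of length at least 4.
  The cycle is listed as xs; the adjacencies among its vertices are exactly the
  cyclically consecutive pairs.\<close>
definition hole :: "'a set \<Rightarrow> ('a \<Rightarrow> 'a \<Rightarrow> bool) \<Rightarrow> 'a set \<Rightarrow> bool" where
  "hole V E S \<longleftrightarrow> S \<subseteq> V \<and> (\<exists>xs. distinct xs \<and> set xs = S \<and> length xs \<ge> 4 \<and>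
     (\<forall>i<length xs. \<forall>j<length xs.
        E (xs ! i) (xs ! j) \<longleftrightarrow> (j = Suc i mod length xs \<or> i = Suc j mod length xs)))"

definition num_holes :: "'a set \<Rightarrow> ('a \<Rightarrow> 'a \<Rightarrow> bool) \<Rightarrow> nat" where
  "num_holes V E = card {S. hole V E S}"

definition hole_edges :: "('a \<Rightarrow> 'a \<Rightarrow> bool) \<Rightarrow> 'a set \<Rightarrow> 'a set set" where
  "hole_edges E S = {{x, y} | x y. x \<in> S \<and> y \<in> S \<and> E x y}"

definition holes_edge_disjoint :: "'a set \<Rightarrow> ('a \<Rightarrow> 'a \<Rightarrow> bool) \<Rightarrow> bool" where
  "holes_edge_disjoint V E \<longleftrightarrow>
     (\<forall>S T. hole V E S \<and> hole V E T \<and> S \<noteq> T \<longrightarrow> hole_edges E S \<inter> hole_edges E T = {})"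

definition clique :: "'a set \<Rightarrow> ('a \<Rightarrow> 'a \<Rightarrow> bool) \<Rightarrow> 'a set \<Rightarrow> bool" where
  "clique V E K \<longleftrightarrow> K \<subseteq> V \<and> (\<forall>x\<in>K. \<forall>y\<in>K. x \<noteq> y \<longrightarrow> E x y)"

definition maximal_clique :: "'a set \<Rightarrow> ('a \<Rightarrow> 'a \<Rightarrow> bool) \<Rightarrow> 'a set \<Rightarrow> bool" where
  "maximal_clique V E K \<longleftrightarrow> clique V E K \<and> (\<forall>K'. clique V E K' \<and> K \<subseteq> K' \<longrightarrow> K' = K)"

definition clique_number :: "'a set \<Rightarrow> ('a \<Rightarrow> 'a \<Rightarrow> bool) \<Rightarrow> nat" where
  "clique_number V E = Max (card ` {K. clique V E K})"

definition add_isolated_V :: "'a set \<Rightarrow> nat \<Rightarrow> ('a + nat) set" where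
  "add_isolated_V V k = Inl ` V \<union> Inr ` {..<k}"

fun add_isolated_E :: "('a \<Rightarrow> 'a \<Rightarrow> bool) \<Rightarrow> ('a + nat) \<Rightarrow> ('a + nat) \<Rightarrow> bool" where
  "add_isolated_E E (Inl x) (Inl y) = E x y"
| "add_isolated_E E _ _ = False"

definition is_competition_graph_of_acyclic ::
  "'b set \<Rightarrow> ('b \<Rightarrow> 'b \<Rightarrow> bool) \<Rightarrow> bool" where
  "is_competition_graph_of_acyclic W F \<longleftrightarrow>
     (\<exists>A. A \<subseteq> W \<times> W \<and> acyclic A \<and>
        (\<forall>x\<in>W. \<forall>y\<in>W. x \<noteq> y \<longrightarrow> (F x y \<longleftrightarrow> (\<exists>v\<in>W. (x, v) \<in> A \<and> (y, v) \<in> A))))"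

definition competition_number :: "'a set \<Rightarrow> ('a \<Rightarrow> 'a \<Rightarrow> bool) \<Rightarrow> nat" where
  "competition_number V E =
     (LEAST k. is_competition_graph_of_acyclic (add_isolated_V V k) (add_isolated_E E))"

end

theory Submission
  imports Defs
begin


definition Fset :: "'a set \<Rightarrow> ('a \<Rightarrow> 'a \<Rightarrow> bool) \<Rightarrow> 'a set \<Rightarrow> 'a set set" where
  "Fset V E K = {{x,y} | x y. E x y \<and> \<not>(x\<in>K \<and> y\<in>K)}"

lemma scheme_realize:
  fixes r :: "'a \<Rightarrow> nat"
  assumes sg: "simple_graph V E" and cl: "clique V E K"
    and sch: "\<forall>e\<in>Fset V E K. \<forall>u. \<sigma> e = Some u \<longrightarrow> u \<in> V \<and> (\<forall>x\<in>e. r x < r u)"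
    and inj: "\<forall>e\<in>Fset V E K. \<forall>e'\<in>Fset V E K. \<sigma> e = \<sigma> e' \<longrightarrow> \<sigma> e \<noteq> None \<longrightarrow> e = e'"
  shows "is_competition_graph_of_acyclic (add_isolated_V V (Suc (card {e\<in>Fset V E K. \<sigma> e = None}))) (add_isolated_E E)"
proof -
  define F where "F = Fset V E K"
  define NS where "NS = {e\<in>F. \<sigma> e = None}"
  define N where "N = card NS"
  have finV: "finite V" using sg by (simp add: simple_graph_def)
  have FV: "\<forall>e\<in>F. e \<subseteq> V" using sg by (auto simp: F_def Fset_def simple_graph_def)
  have finF: "finite F"
  proof -
    have "F \<subseteq> Pow V" using FV by auto
    thus ?thesis using finV finite_subset by blast
  qed
  have finNS: "finite NS" using finF by (simp add: NS_def)
  obtain g where g: "bij_betw g NS {0..<N}" using ex_bij_betw_finite_nat[OF finNS] N_def by blast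
  define sink where "sink e = (case \<sigma> e of Some u \<Rightarrow> Inl u | None \<Rightarrow> Inr (g e))" for e
  define W where "W = add_isolated_V V (Suc N)"
  define A :: "('a + nat) rel" where "A = {(Inl x, sink e) | x e. e \<in> F \<and> x \<in> e} \<union> {(Inl x, Inr N) | x. x \<in> K}"
  have sinkW: "sink e \<in> W" if "e \<in> F" for e
  proof (cases "\<sigma> e")
    case None
    then have "e \<in> NS" using that by (simp add: NS_def)
    then have "g e < N" using g by (auto simp: bij_betw_def)
    then show ?thesis using None by (simp add: sink_def W_def add_isolated_V_def)
  next
    case (Some u)
    then show ?thesis using sch that by (simp add: sink_def W_def add_isolated_V_def F_def)
  qed
  have sinkN: "sink e \<noteq> Inr N" if "e \<in> F" for e
  proof (cases "\<sigma> e")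
    case None
    then have "e \<in> NS" using that by (simp add: NS_def)
    then have "g e < N" using g by (auto simp: bij_betw_def)
    then show ?thesis using None by (simp add: sink_def)
  qed (simp add: sink_def)
  have sinkinj: "e = e'" if "e \<in> F" "e' \<in> F" "sink e = sink e'" for e e'
  proof (cases "\<sigma> e")
    case None
    then show ?thesis
    proof (cases "\<sigma> e'")
      case None2: None
      have "e \<in> NS" "e' \<in> NS" using None None2 that by (auto simp: NS_def)
      moreover have "g e = g e'" using that None None2 by (simp add: sink_def)
      ultimately show ?thesis using g by (auto simp: bij_betw_def inj_on_def)
    next
      case (Some u) then show ?thesis using None that by (simp add: sink_def)
    qed
  next
    case (Some u)
    then show ?thesis
    proof (cases "\<sigma> e'")
      case None
      then show ?thesis using Some that by (simp add: sink_def)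
    next
      case (Some u')
      then have "\<sigma> e = \<sigma> e'" using \<open>\<sigma> e = Some u\<close> that by (simp add: sink_def)
      then show ?thesis using inj that \<open>\<sigma> e = Some u\<close> unfolding F_def by blast
    qed
  qed
  have KV: "K \<subseteq> V" using cl by (simp add: clique_def)
  have AW: "A \<subseteq> W \<times> W"
  proof
    fix p assume "p \<in> A"
    then show "p \<in> W \<times> W"
      using sinkW FV KV by (auto simp: A_def W_def add_isolated_V_def)
  qed
  define R where "R = Suc (Max (insert 0 (r ` V)))"
  define \<rho> :: "'a + nat \<Rightarrow> nat" where "\<rho> p = (case p of Inl x \<Rightarrow> r x | Inr _ \<Rightarrow> R)" for p
  have rR: "r x < R" if "x \<in> V" for x
  proof -
    have "r x \<le> Max (insert 0 (r ` V))" using finV that by (intro Max_ge) auto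
    then show ?thesis by (simp add: R_def)
  qed
  have Arho: "A \<subseteq> inv_image less_than \<rho>"
  proof
    fix p assume "p \<in> A"
    then consider (a) x e where "p = (Inl x, sink e)" "e \<in> F" "x \<in> e"
      | (b) x where "p = (Inl x, Inr N)" "x \<in> K" by (auto simp: A_def)
    then show "p \<in> inv_image less_than \<rho>"
    proof cases
      case a
      show ?thesis
      proof (cases "\<sigma> e")
        case None
        then show ?thesis using a FV rR by (auto simp: sink_def \<rho>_def)
      next
        case (Some u)
        then show ?thesis using a sch by (auto simp: sink_def \<rho>_def F_def)
      qed
    next
      case b then show ?thesis using KV rR by (auto simp: \<rho>_def)
    qed
  qed
  have acyc: "acyclic A"
    by (rule wf_acyclic, rule wf_subset[OF _ Arho], simp)
  have comp: "\<forall>x\<in>W. \<forall>y\<in>W. x \<noteq> y \<longrightarrow> (add_isolated_E E x y \<longleftrightarrow> (\<exists>v\<in>W. (x, v) \<in> A \<and> (y, v) \<in> A))"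
  proof (intro ballI impI)
    fix x y assume xW: "x \<in> W" and yW: "y \<in> W" and xy: "x \<noteq> y"
    show "add_isolated_E E x y \<longleftrightarrow> (\<exists>v\<in>W. (x, v) \<in> A \<and> (y, v) \<in> A)"
    proof (cases x)
      case (Inl a)
      show ?thesis
      proof (cases y)
        case (Inl b)
        have ab: "a \<noteq> b" using xy Inl \<open>x = Inl a\<close> by auto
        show ?thesis
        proof
          assume "add_isolated_E E x y"
          then have Eab: "E a b" using \<open>x = Inl a\<close> Inl by simp
          show "\<exists>v\<in>W. (x, v) \<in> A \<and> (y, v) \<in> A"
          proof (cases "a \<in> K \<and> b \<in> K")
            case True
            then show ?thesis using \<open>x = Inl a\<close> Inl
              by (intro bexI[of _ "Inr N"]) (auto simp: A_def W_def add_isolated_V_def)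
          next
            case False
            then have eF: "{a,b} \<in> F" using Eab by (auto simp: F_def Fset_def)
            then show ?thesis using \<open>x = Inl a\<close> Inl sinkW
              by (intro bexI[of _ "sink {a,b}"]) (auto simp: A_def)
          qed
        next
          assume "\<exists>v\<in>W. (x, v) \<in> A \<and> (y, v) \<in> A"
          then obtain w where w: "(Inl a, w) \<in> A" "(Inl b, w) \<in> A" using \<open>x = Inl a\<close> Inl by auto
          have "E a b"
          proof (cases "w = Inr N")
            case True
            then have "a \<in> K" "b \<in> K" using w sinkN by (auto simp: A_def) (metis sinkN)+
            then show ?thesis using cl ab by (simp add: clique_def)
          next
            case False
            then obtain e e' where "e \<in> F" "a \<in> e" "w = sink e" "e' \<in> F" "b \<in> e'" "w = sink e'"
              using w by (auto simp: A_def)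
            then have "e = e'" using sinkinj by auto
            with \<open>e \<in> F\<close> \<open>a \<in> e\<close> \<open>b \<in> e'\<close> obtain p q where "e = {p,q}" "E p q"
              by (auto simp: F_def Fset_def)
            then show ?thesis using \<open>a \<in> e\<close> \<open>b \<in> e'\<close> \<open>e = e'\<close> ab sg
              by (auto simp: simple_graph_def)
          qed
          then show "add_isolated_E E x y" using \<open>x = Inl a\<close> Inl by simp
        qed
      next
        case (Inr i)
        then show ?thesis using \<open>x = Inl a\<close> by (auto simp: A_def)
      qed
    next
      case (Inr i)
      then show ?thesis by (auto simp: A_def)
    qed
  qed
  show ?thesis
    unfolding is_competition_graph_of_acyclic_def
    using AW acyc comp by (auto simp: W_def N_def NS_def F_def)
qed



lemma handshake:
  assumes "finite V" "\<forall>e\<in>F. e \<subseteq> V \<and> card e = 2"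
  shows "(\<Sum>v\<in>V. card {e\<in>F. v\<in>e}) = 2 * card F"
proof -
  have finF: "finite F"
  proof -
    have "F \<subseteq> Pow V" using assms(2) by auto
    thus ?thesis using assms(1) finite_subset by blast
  qed
  have "(\<Sum>v\<in>V. card {e\<in>F. v\<in>e}) = (\<Sum>v\<in>V. \<Sum>e\<in>F. if v \<in> e then 1 else 0)"
    using finF by (simp add: sum.inter_filter[symmetric])
  also have "\<dots> = (\<Sum>e\<in>F. \<Sum>v\<in>V. if v \<in> e then 1 else 0)"
    by (rule sum.swap)
  also have "\<dots> = (\<Sum>e\<in>F. card {v\<in>V. v\<in>e})"
    using assms(1) by (simp add: sum.inter_filter[symmetric])
  also have "\<dots> = (\<Sum>e\<in>F. 2)"
  proof (rule sum.cong)
    fix e assume "e \<in> F"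
    then have "{v\<in>V. v\<in>e} = e" using assms(2) by auto
    then show "card {v\<in>V. v\<in>e} = 2" using assms(2) \<open>e\<in>F\<close> by simp
  qed simp
  finally show ?thesis by simp
qed

lemma scheme_exists:
  fixes F :: "'a set set" and V :: "'a set" and b :: int
  assumes "finite V" "\<forall>e\<in>F. \<exists>x y. e = {x,y} \<and> x \<noteq> y \<and> x \<in> V \<and> y \<in> V" "b \<ge> 1"
    "int (card F) \<le> int (card V) + b - 2"
  shows "\<exists>(r::'a\<Rightarrow>nat) \<sigma>. (\<forall>e\<in>F. \<forall>u. \<sigma> e = Some u \<longrightarrow> u \<in> V \<and> (\<forall>x\<in>e. r x < r u))
     \<and> (\<forall>e\<in>F. \<forall>e'\<in>F. \<sigma> e = \<sigma> e' \<longrightarrow> \<sigma> e \<noteq> None \<longrightarrow> e = e')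
     \<and> int (card {e\<in>F. \<sigma> e = None}) \<le> b"
  using assms
proof (induction "card V" arbitrary: V F b rule: less_induct)
  case less
  note finV = less.prems(1) and Fe = less.prems(2) and b1 = less.prems(3) and cardF = less.prems(4)
  have FV: "\<forall>e\<in>F. e \<subseteq> V \<and> card e = 2" using Fe by fastforce
  have finF: "finite F"
  proof -
    have "F \<subseteq> Pow V" using FV by auto
    thus ?thesis using finV finite_subset by blast
  qed
  show ?case
  proof (cases "V = {}")
    case True
    then have "F = {}" using Fe by auto
    then show ?thesis by (intro exI[of _ "\<lambda>_. 0"] exI[of _ "\<lambda>_. None"]) (use b1 in simp)
  next
    case False
    define deg where "deg v = card {e\<in>F. v\<in>e}" for v
    have "\<exists>v\<in>V. int (deg v) \<le> b"
    proof (rule ccontr)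
      assume "\<not> ?thesis"
      then have big: "\<forall>v\<in>V. int (deg v) \<ge> b + 1" by auto
      show False
      proof (cases "card V = 1")
        case True
        then obtain w where "V = {w}" using card_1_singletonE by blast
        then have "F = {}" using Fe by auto
        then show False using big \<open>V = {w}\<close> b1 by (simp add: deg_def)
      next
        case False
        have "card V \<noteq> 0" using \<open>V \<noteq> {}\<close> finV by simp
        then have n2: "card V \<ge> 2" using False by linarith
        have "(\<Sum>v\<in>V. int (deg v)) \<ge> (\<Sum>v\<in>V. b + 1)" using big by (intro sum_mono) auto
        then have "int (2 * card F) \<ge> int (card V) * (b + 1)"
          using handshake[OF finV FV] by (simp add: deg_def flip: of_nat_sum)
        moreover have "(int (card V) - 2) * (b - 1) \<ge> 0" using n2 b1 by simp
        ultimately show False using cardF by (simp add: algebra_simps)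
      qed
    qed
    then obtain v where vV: "v \<in> V" and degv: "int (deg v) \<le> b" by blast
    define V' where "V' = V - {v}"
    define F' where "F' = {e\<in>F. v \<notin> e}"
    define Fv where "Fv = {e\<in>F. v \<in> e}"
    have cardV': "card V' = card V - 1" using vV finV by (simp add: V'_def)
    have FF: "F = F' \<union> Fv" "F' \<inter> Fv = {}" by (auto simp: F'_def Fv_def)
    have cardFF: "card F = card F' + deg v"
    proof -
      have "finite F'" "finite Fv" using finF by (auto simp: F'_def Fv_def)
      then have "card (F' \<union> Fv) = card F' + card Fv" using FF(2) by (rule card_Un_disjoint)
      then show ?thesis by (metis FF(1) deg_def Fv_def)
    qed
    have Fe': "\<forall>e\<in>F'. \<exists>x y. e = {x,y} \<and> x \<noteq> y \<and> x \<in> V' \<and> y \<in> V'"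
      using Fe by (fastforce simp: F'_def V'_def)
    define b' where "b' = b - int (deg v) + 1"
    have "int (card F') \<le> int (card V') + b' - 2"
      using cardF cardFF cardV' vV finV \<open>V \<noteq> {}\<close> by (simp add: b'_def card_gt_0_iff)
    moreover have "b' \<ge> 1" using degv by (simp add: b'_def)
    moreover have "card V' < card V"
    proof -
      have "card V > 0" using vV finV card_gt_0_iff by blast
      thus ?thesis using cardV' by linarith
    qed
    moreover have "finite V'" using finV by (simp add: V'_def)
    ultimately obtain r' \<sigma>' where
      sch': "\<forall>e\<in>F'. \<forall>u. \<sigma>' e = Some u \<longrightarrow> u \<in> V' \<and> (\<forall>x\<in>e. (r'::'a\<Rightarrow>nat) x < r' u)"
      and inj': "\<forall>e\<in>F'. \<forall>e'\<in>F'. \<sigma>' e = \<sigma>' e' \<longrightarrow> \<sigma>' e \<noteq> None \<longrightarrow> e = e'"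
      and cnt': "int (card {e\<in>F'. \<sigma>' e = None}) \<le> b'"
      using less.hyps[of V' F' b'] Fe' by blast
    define R where "R = Suc (Max (insert 0 (r' ` V')))"
    have rR: "r' x < R" if "x \<in> V'" for x
    proof -
      have "r' x \<le> Max (insert 0 (r' ` V'))" using \<open>finite V'\<close> that by (intro Max_ge) auto
      then show ?thesis by (simp add: R_def)
    qed
    define r where "r = r'(v := R)"
    have finF': "finite F'" using finF by (simp add: F'_def)
    define NS' where "NS' = {e\<in>F'. \<sigma>' e = None}"
    have finNS': "finite NS'" using finF' by (simp add: NS'_def)
    have eV': "\<forall>e\<in>F'. e \<subseteq> V'" using Fe' by auto
    show ?thesis
    proof (cases "NS' = {}")
      case True
      define \<sigma> where "\<sigma> e = (if v \<in> e then None else \<sigma>' e)" for e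
      have NSeq: "{e\<in>F. \<sigma> e = None} = Fv"
        using True by (auto simp: \<sigma>_def Fv_def NS'_def F'_def)
      show ?thesis
      proof (intro exI[of _ r] exI[of _ \<sigma>] conjI)
        show "\<forall>e\<in>F. \<forall>u. \<sigma> e = Some u \<longrightarrow> u \<in> V \<and> (\<forall>x\<in>e. r x < r u)"
        proof (intro ballI allI impI)
          fix e u assume "e \<in> F" "\<sigma> e = Some u"
          then have "e \<in> F'" "\<sigma>' e = Some u" by (auto simp: \<sigma>_def F'_def split: if_splits)
          then show "u \<in> V \<and> (\<forall>x\<in>e. r x < r u)"
            using sch' eV' by (auto simp: r_def V'_def)
        qed
        show "\<forall>e\<in>F. \<forall>e'\<in>F. \<sigma> e = \<sigma> e' \<longrightarrow> \<sigma> e \<noteq> None \<longrightarrow> e = e'"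
          using inj' by (auto simp: \<sigma>_def F'_def)
        show "int (card {e\<in>F. \<sigma> e = None}) \<le> b" using NSeq degv by (simp add: deg_def Fv_def)
      qed
    next
      case False
      then obtain e0 where e0: "e0 \<in> NS'" by blast
      define \<sigma> where "\<sigma> e = (if e = e0 then Some v else if v \<in> e then None else \<sigma>' e)" for e
      have e0F': "e0 \<in> F'" "\<sigma>' e0 = None" using e0 by (auto simp: NS'_def)
      have NSeq: "{e\<in>F. \<sigma> e = None} = (NS' - {e0}) \<union> Fv"
        using e0F' by (auto simp: \<sigma>_def Fv_def NS'_def F'_def)
      have "card {e\<in>F. \<sigma> e = None} = card (NS' - {e0}) + card Fv"
        unfolding NSeq
        by (rule card_Un_disjoint) (use finNS' finF in \<open>auto simp: Fv_def NS'_def F'_def\<close>)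
      also have "\<dots> = card NS' - 1 + deg v" using e0 finNS' by (simp add: deg_def Fv_def)
      finally have cnt: "card {e\<in>F. \<sigma> e = None} = card NS' - 1 + deg v" .
      have "card NS' \<noteq> 0" using e0 finNS' by (metis card_0_eq empty_iff)
      then have "card NS' \<ge> 1" by simp
      show ?thesis
      proof (intro exI[of _ r] exI[of _ \<sigma>] conjI)
        show "\<forall>e\<in>F. \<forall>u. \<sigma> e = Some u \<longrightarrow> u \<in> V \<and> (\<forall>x\<in>e. r x < r u)"
        proof (intro ballI allI impI)
          fix e u assume eF: "e \<in> F" and su: "\<sigma> e = Some u"
          show "u \<in> V \<and> (\<forall>x\<in>e. r x < r u)"
          proof (cases "e = e0")
            case True
            then have "u = v" using su by (simp add: \<sigma>_def)
            moreover have "\<forall>x\<in>e0. x \<in> V'" using eV' e0F' by auto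
            ultimately show ?thesis using True vV rR by (auto simp: r_def V'_def)
          next
            case False
            then have "e \<in> F'" "\<sigma>' e = Some u" using eF su by (auto simp: \<sigma>_def F'_def split: if_splits)
            then show ?thesis using sch' eV' by (auto simp: r_def V'_def)
          qed
        qed
        show "\<forall>e\<in>F. \<forall>e'\<in>F. \<sigma> e = \<sigma> e' \<longrightarrow> \<sigma> e \<noteq> None \<longrightarrow> e = e'"
        proof (intro ballI impI)
          fix e e' assume "e \<in> F" "e' \<in> F" "\<sigma> e = \<sigma> e'" "\<sigma> e \<noteq> None"
          then show "e = e'" using inj' sch' e0F' unfolding \<sigma>_def F'_def V'_def
            by (auto split: if_splits)
        qed
        show "int (card {e\<in>F. \<sigma> e = None}) \<le> b"
          using cnt cnt' \<open>card NS' \<ge> 1\<close> by (simp add: b'_def NS'_def)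
      qed
    qed
  qed
qed



definition delv :: "('a \<Rightarrow> 'a \<Rightarrow> bool) \<Rightarrow> 'a \<Rightarrow> 'a \<Rightarrow> 'a \<Rightarrow> bool" where
  "delv E v = (\<lambda>x y. E x y \<and> x \<noteq> v \<and> y \<noteq> v)"

lemma sg_sym: "simple_graph V E \<Longrightarrow> E x y \<Longrightarrow> E y x" by (simp add: simple_graph_def)
lemma sg_irr: "simple_graph V E \<Longrightarrow> \<not> E x x" by (auto simp: simple_graph_def)
lemma sg_V: "simple_graph V E \<Longrightarrow> E x y \<Longrightarrow> x \<in> V \<and> y \<in> V" by (simp add: simple_graph_def)

lemma simple_delv: "simple_graph V E \<Longrightarrow> simple_graph (V - {v}) (delv E v)"
  by (auto simp: simple_graph_def delv_def)

lemma hole_delv: "hole (V - {v}) (delv E v) S \<longleftrightarrow> hole V E S \<and> v \<notin> S"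
proof
  assume h: "hole (V - {v}) (delv E v) S"
  then obtain xs where xs: "distinct xs" "set xs = S" "length xs \<ge> 4"
     "\<forall>i<length xs. \<forall>j<length xs. delv E v (xs!i) (xs!j) \<longleftrightarrow> (j = Suc i mod length xs \<or> i = Suc j mod length xs)"
     and SV: "S \<subseteq> V - {v}" by (auto simp: hole_def)
  have nv: "\<forall>i<length xs. xs!i \<noteq> v" using xs(2) SV nth_mem by blast
  have "\<forall>i<length xs. \<forall>j<length xs. E (xs!i) (xs!j) \<longleftrightarrow> (j = Suc i mod length xs \<or> i = Suc j mod length xs)"
    using xs(4) nv by (simp add: delv_def)
  then show "hole V E S \<and> v \<notin> S" using xs SV unfolding hole_def by blast
next
  assume h: "hole V E S \<and> v \<notin> S"
  then obtain xs where xs: "distinct xs" "set xs = S" "length xs \<ge> 4"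
     "\<forall>i<length xs. \<forall>j<length xs. E (xs!i) (xs!j) \<longleftrightarrow> (j = Suc i mod length xs \<or> i = Suc j mod length xs)"
     and SV: "S \<subseteq> V" "v \<notin> S" by (auto simp: hole_def)
  have nv: "\<forall>i<length xs. xs!i \<noteq> v" using xs(2) SV nth_mem by blast
  have "\<forall>i<length xs. \<forall>j<length xs. delv E v (xs!i) (xs!j) \<longleftrightarrow> (j = Suc i mod length xs \<or> i = Suc j mod length xs)"
    using xs(4) nv by (simp add: delv_def)
  then show "hole (V - {v}) (delv E v) S" using xs SV unfolding hole_def by blast
qed

lemma hole_edges_delv: "v \<notin> S \<Longrightarrow> hole_edges (delv E v) S = hole_edges E S"
  unfolding hole_edges_def delv_def by blast

lemma pred_mod: assumes "j < L" "i = Suc j mod L" shows "j = (i + L - 1) mod L"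
proof (cases "Suc j = L")
  case True then show ?thesis using assms by simp
next
  case False then have "Suc j < L" using assms(1) by simp
  then have "i = Suc j" using assms(2) by simp
  then show ?thesis using assms(1) by simp
qed

lemma hole_three_nbrs:
  assumes "hole V E S" "x \<in> S" "a \<in> S" "b \<in> S" "c \<in> S" "E x a" "E x b" "E x c"
    "a \<noteq> b" "a \<noteq> c" "b \<noteq> c"
  shows False
proof -
  obtain xs where xs: "distinct xs" "set xs = S" "length xs \<ge> 4"
     "\<forall>i<length xs. \<forall>j<length xs. E (xs!i) (xs!j) \<longleftrightarrow> (j = Suc i mod length xs \<or> i = Suc j mod length xs)"
    using assms(1) by (auto simp: hole_def)
  define L where "L = length xs"
  obtain i where i: "i < L" "xs!i = x" using assms(2) xs(2) by (auto simp: L_def in_set_conv_nth)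
  have key: "j = Suc i mod L \<or> j = (i + L - 1) mod L" if "j < L" "E x (xs!j)" for j
    using xs(4) i that pred_mod[of j L i] by (auto simp: L_def)
  obtain ja where ja: "ja < L" "xs!ja = a" using assms(3) xs(2) by (auto simp: L_def in_set_conv_nth)
  obtain jb where jb: "jb < L" "xs!jb = b" using assms(4) xs(2) by (auto simp: L_def in_set_conv_nth)
  obtain jc where jc: "jc < L" "xs!jc = c" using assms(5) xs(2) by (auto simp: L_def in_set_conv_nth)
  have "ja \<noteq> jb" "ja \<noteq> jc" "jb \<noteq> jc" using ja jb jc assms(9-11) by auto
  moreover have "ja = Suc i mod L \<or> ja = (i + L - 1) mod L" using key ja assms(6) by simp
  moreover have "jb = Suc i mod L \<or> jb = (i + L - 1) mod L" using key jb assms(7) by simp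
  moreover have "jc = Suc i mod L \<or> jc = (i + L - 1) mod L" using key jc assms(8) by simp
  ultimately show False by auto
qed

lemma sym_rtranclp:
  assumes "\<forall>a b. r a b \<longrightarrow> r b a" "r\<^sup>*\<^sup>* x y" shows "r\<^sup>*\<^sup>* y x"
  using assms(2)
proof induction
  case base show ?case by simp
next
  case (step y z)
  then show ?case using assms(1) by (meson converse_rtranclp_into_rtranclp)
qed

lemma suc_mod_lt: "x < L \<Longrightarrow> Suc x mod L = (if Suc x = L then 0 else Suc x)"
  by (cases "Suc x = L") auto

lemma hole_through:
  assumes sg: "simple_graph V E" and vV: "v \<in> V"
    and conn: "\<forall>x\<in>V-{v}. \<forall>y\<in>V-{v}. (delv E v)\<^sup>*\<^sup>* x y"
    and A: "A \<noteq> {}" and B: "B \<noteq> {}" and AB: "A \<inter> B = {}" and ABN: "A \<union> B = {u. E v u}"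
    and indep: "\<forall>x y. E v x \<longrightarrow> E v y \<longrightarrow> \<not> E x y"
  shows "\<exists>S. hole V E S \<and> v \<in> S \<and> (\<exists>a\<in>A. a \<in> S) \<and> (\<exists>b\<in>B. b \<in> S)"
proof -
  define E' where "E' = delv E v"
  have E'sym: "E' x y \<Longrightarrow> E' y x" for x y using sg by (auto simp: E'_def delv_def simple_graph_def)
  have E'E: "E' x y \<Longrightarrow> E x y" "E' x y \<Longrightarrow> x \<noteq> v" "E' x y \<Longrightarrow> y \<noteq> v" for x y
    by (auto simp: E'_def delv_def)
  define P where "P m \<longleftrightarrow> (\<exists>f. f 0 \<in> A \<and> f m \<in> B \<and> (\<forall>i<m. E' (f i) (f (Suc i))))" for m
  obtain a0 b0 where a0: "a0 \<in> A" and b0: "b0 \<in> B" using A B by blast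
  have "E v a0" "E v b0" using a0 b0 ABN by auto
  then have "a0 \<in> V - {v}" "b0 \<in> V - {v}" using sg sg_irr sg_V by fastforce+
  then have "E'\<^sup>*\<^sup>* a0 b0" using conn by (simp add: E'_def)
  then obtain n where "(E' ^^ n) a0 b0" using rtranclp_imp_relpowp by fast
  then have "P n" unfolding P_def relpowp_fun_conv using a0 b0 by blast
  then obtain m where Pm: "P m" and mmin: "\<forall>m'. P m' \<longrightarrow> m \<le> m'"
    using ex_has_least_nat[of P n "\<lambda>x. x"] by blast
  then obtain f where f0: "f 0 \<in> A" and fm: "f m \<in> B" and fp: "\<forall>i<m. E' (f i) (f (Suc i))"
    by (auto simp: P_def)
  have notB: "f k \<notin> B" if "k < m" for k
  proof
    assume "f k \<in> B"
    then have "P k" unfolding P_def using f0 fp that by (intro exI[of _ f]) auto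
    then show False using mmin that by fastforce
  qed
  have notA: "f k \<notin> A" if "0 < k" "k \<le> m" for k
  proof
    assume fk: "f k \<in> A"
    have "P (m - k)" unfolding P_def
    proof (intro exI[of _ "\<lambda>t. f (t + k)"] conjI allI impI)
      show "f (0 + k) \<in> A" using fk by simp
      show "f (m - k + k) \<in> B" using fm that by simp
      fix i assume "i < m - k"
      then show "E' (f (i + k)) (f (Suc i + k))" using fp by simp
    qed
    then show False using mmin that by fastforce
  qed
  have nochord: "\<not> E' (f i) (f j)" if "Suc i < j" "j \<le> m" for i j
  proof
    assume Eij: "E' (f i) (f j)"
    define g where "g t = (if t \<le> i then f t else f (t - Suc i + j))" for t
    have "P (m - (j - Suc i))" unfolding P_def
    proof (intro exI[of _ g] conjI allI impI)
      show "g 0 \<in> A" using f0 by (simp add: g_def)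
      have nle: "\<not> (m - (j - Suc i) \<le> i)" using that by simp
      have eq: "m - (j - Suc i) - Suc i + j = m" using that by simp
      show "g (m - (j - Suc i)) \<in> B" unfolding g_def if_not_P[OF nle] eq using fm .
      fix t assume t: "t < m - (j - Suc i)"
      show "E' (g t) (g (Suc t))"
      proof (cases "t < i")
        case True then show ?thesis using fp that by (simp add: g_def)
      next
        case False
        show ?thesis
        proof (cases "t = i")
          case True then show ?thesis using Eij by (simp add: g_def)
        next
          case False
          then have "t > i" using \<open>\<not> t < i\<close> by simp
          then have "Suc t - Suc i + j = Suc (t - Suc i + j)" "t - Suc i + j < m" using t that by auto
          then show ?thesis using fp \<open>t > i\<close> by (simp add: g_def)
        qed
      qed
    qed
    then show False using mmin that by fastforce
  qed
  have finj: "f i \<noteq> f j" if "i < j" "j \<le> m" for i j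
  proof
    assume fij: "f i = f j"
    show False
    proof (cases "j = m")
      case True then show False using fij fm notB[of i] that by simp
    next
      case False
      then have jm: "j < m" using that by simp
      define g where "g t = (if t \<le> i then f t else f (t - i + j))" for t
      have "P (m - (j - i))" unfolding P_def
      proof (intro exI[of _ g] conjI allI impI)
        show "g 0 \<in> A" using f0 by (simp add: g_def)
        have nle: "\<not> (m - (j - i) \<le> i)" using that jm by simp
        have eq: "m - (j - i) - i + j = m" using that jm by simp
        show "g (m - (j - i)) \<in> B" unfolding g_def if_not_P[OF nle] eq using fm .
        fix t assume t: "t < m - (j - i)"
        show "E' (g t) (g (Suc t))"
        proof (cases "t < i")
          case True then show ?thesis using fp that by (simp add: g_def)
        next
          case False
          show ?thesis
          proof (cases "t = i")
            case True
            have "Suc i - i + j = Suc j" by simp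
            then show ?thesis using True fp jm fij by (simp add: g_def)
          next
            case False
            then have "t > i" using \<open>\<not> t < i\<close> by simp
            then have "Suc t - i + j = Suc (t - i + j)" "t - i + j < m" using t that by auto
            then show ?thesis using fp \<open>t > i\<close> by (simp add: g_def)
          qed
        qed
      qed
      then show False using mmin that by fastforce
    qed
  qed
  have m0: "m \<noteq> 0" using f0 fm AB by auto
  have Nv0: "E v (f 0)" "E v (f m)" using f0 fm ABN by auto
  have m1: "m \<noteq> 1"
  proof
    assume "m = 1"
    then have "E' (f 0) (f 1)" using fp by simp
    then show False using indep Nv0 E'E \<open>m = 1\<close> by auto
  qed
  have m2: "m \<ge> 2" using m0 m1 by linarith
  have fnv: "f k \<noteq> v \<and> f k \<in> V" if "k \<le> m" for k
  proof (cases "k < m")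
    case True then show ?thesis using fp E'E sg_V[OF sg] by blast
  next
    case False
    then have "k = Suc (m - 1)" using that m0 by simp
    moreover have "E' (f (m - 1)) (f (Suc (m - 1)))"
    proof -
      have "m - 1 < m" using m0 by simp
      thus ?thesis using fp by blast
    qed
    ultimately show ?thesis using E'E sg_V[OF sg] by metis
  qed
  have Nv: "E v (f k) \<longleftrightarrow> k = 0 \<or> k = m" if "k \<le> m" for k
  proof
    assume "E v (f k)"
    then have "f k \<in> A \<union> B" using ABN by auto
    then show "k = 0 \<or> k = m" using notA notB that by force
  next
    assume "k = 0 \<or> k = m" then show "E v (f k)" using Nv0 by auto
  qed
  have Ff: "E (f k) (f l) \<longleftrightarrow> l = Suc k \<or> k = Suc l" if "k \<le> m" "l \<le> m" for k l
  proof
    assume Ekl: "E (f k) (f l)"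
    then have E'kl: "E' (f k) (f l)" using fnv that by (simp add: E'_def delv_def)
    have "k \<noteq> l" using Ekl sg_irr[OF sg] by auto
    show "l = Suc k \<or> k = Suc l"
    proof (rule ccontr)
      assume "\<not> ?thesis"
      then have "Suc k < l \<or> Suc l < k" using \<open>k \<noteq> l\<close> by linarith
      then show False using nochord E'kl E'sym that by blast
    qed
  next
    assume "l = Suc k \<or> k = Suc l"
    then show "E (f k) (f l)" using fp E'E E'sym that by auto
  qed
  define xs where "xs = v # map f [0..<Suc m]"
  have Lxs: "length xs = m + 2" by (simp add: xs_def)
  have xs0: "xs ! 0 = v" by (simp add: xs_def)
  have xsS: "xs ! Suc k = f k" if "k \<le> m" for k
    using that by (simp add: xs_def nth_map del: upt_Suc)
  have dist: "distinct xs"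
  proof -
    have "inj_on f {0..<Suc m}"
    proof (rule inj_onI)
      fix x y assume "x \<in> {0..<Suc m}" "y \<in> {0..<Suc m}" "f x = f y"
      then show "x = y" using finj[of x y] finj[of y x] by (cases x y rule: linorder_cases) auto
    qed
    moreover have "v \<notin> f ` {0..<Suc m}"
    proof
      assume "v \<in> f ` {0..<Suc m}"
      then obtain k where "k < Suc m" "v = f k" by auto
      then show False using fnv[of k] by simp
    qed
    ultimately show ?thesis by (simp add: xs_def distinct_map del: upt_Suc)
  qed
  have setxs: "set xs = insert v (f ` {0..m})"
    by (auto simp: xs_def atLeastLessThanSuc_atLeastAtMost simp del: upt_Suc)
  have adj: "\<forall>i<length xs. \<forall>j<length xs. E (xs!i) (xs!j) \<longleftrightarrow> (j = Suc i mod length xs \<or> i = Suc j mod length xs)"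
  proof (intro allI impI)
    fix i j assume i: "i < length xs" and j: "j < length xs"
    define L where "L = length xs"
    have L: "L = m + 2" by (simp add: L_def Lxs)
    show "E (xs!i) (xs!j) \<longleftrightarrow> (j = Suc i mod length xs \<or> i = Suc j mod length xs)"
    proof (cases i)
      case 0
      then show ?thesis
      proof (cases j)
        case 0
        then show ?thesis using \<open>i = 0\<close> xs0 sg_irr[OF sg] L m2 Lxs by simp
      next
        case (Suc l)
        then have l: "l \<le> m" using j Lxs by simp
        have "E (xs!i) (xs!j) \<longleftrightarrow> l = 0 \<or> l = m" using Nv[OF l] \<open>i = 0\<close> Suc xs0 xsS[OF l] by simp
        moreover have "Suc 0 mod L = 1" using L m2 by simp
        moreover have "Suc j mod L = (if l = m then 0 else Suc j)" using suc_mod_lt[of j L] j L Suc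
          by (simp add: L_def)
        ultimately show ?thesis using \<open>i = 0\<close> Suc Lxs L by auto
      qed
    next
      case (Suc k)
      then have k: "k \<le> m" using i Lxs by simp
      have sk: "Suc i mod L = (if k = m then 0 else Suc i)" using suc_mod_lt[of i L] i L Suc
        by (simp add: L_def)
      show ?thesis
      proof (cases j)
        case 0
        have xij: "xs!i = f k" "xs!j = v" using \<open>j = 0\<close> Suc xs0 xsS[OF k] by simp_all
        have "E (f k) v \<longleftrightarrow> E v (f k)" using sg_sym[OF sg] by blast
        then have "E (xs!i) (xs!j) \<longleftrightarrow> k = 0 \<or> k = m"
          using Nv[OF k] xij by simp
        moreover have "Suc 0 mod L = 1" using L m2 by simp
        ultimately show ?thesis using \<open>j = 0\<close> Suc sk Lxs L by auto
      next
        case (Suc l)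
        then have l: "l \<le> m" using j Lxs by simp
        have sl: "Suc j mod L = (if l = m then 0 else Suc j)" using suc_mod_lt[of j L] j L Suc
          by (simp add: L_def)
        have "E (xs!i) (xs!j) \<longleftrightarrow> l = Suc k \<or> k = Suc l"
          using Ff[OF k l] \<open>i = Suc k\<close> Suc xsS[OF k] xsS[OF l] by simp
        then show ?thesis using sk sl \<open>i = Suc k\<close> Suc k l Lxs L by auto
      qed
    qed
  qed
  have SV: "set xs \<subseteq> V" using setxs fnv vV by auto
  have "hole V E (set xs)"
    unfolding hole_def using SV dist adj Lxs m2 by auto
  moreover have "v \<in> set xs" "f 0 \<in> set xs" "f m \<in> set xs" using setxs by auto
  ultimately show ?thesis using f0 fm by blast
qed



lemma crossing: assumes "r\<^sup>*\<^sup>* a b" "a \<in> R" "b \<notin> R" shows "\<exists>x y. r x y \<and> x \<in> R \<and> y \<notin> R"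
  using assms by (induction rule: rtranclp_induct) auto

lemma rtranclp_mono_imp: assumes "\<And>a b. r a b \<Longrightarrow> s a b" "r\<^sup>*\<^sup>* x y" shows "s\<^sup>*\<^sup>* x y"
  using assms(2) by (induction rule: rtranclp_induct) (auto intro: rtranclp.rtrancl_into_rtrancl assms(1))

lemma noncut:
  assumes sg: "simple_graph V E" and cg: "connected_graph V E" and cl: "clique V E K"
    and K0: "K \<noteq> {}" and KV: "K \<noteq> V"
  shows "\<exists>v\<in>V - K. \<forall>x\<in>V-{v}. \<forall>y\<in>V-{v}. (delv E v)\<^sup>*\<^sup>* x y"
proof -
  obtain k0 where k0: "k0 \<in> K" using K0 by blast
  have finV: "finite V" using sg by (simp add: simple_graph_def)
  have KsV: "K \<subseteq> V" using cl by (simp add: clique_def)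
  define rest where "rest R = (\<lambda>a b. E a b \<and> a \<in> R \<and> b \<in> R)" for R
  have main: "\<forall>R. K \<subseteq> R \<and> R \<subseteq> V \<and> R \<noteq> V \<and> (\<forall>x\<in>R. (rest R)\<^sup>*\<^sup>* x k0) \<and> card (V - R) = n
     \<longrightarrow> (\<exists>v\<in>V - K. \<forall>x\<in>V-{v}. \<forall>y\<in>V-{v}. (delv E v)\<^sup>*\<^sup>* x y)" for n
  proof (induction n rule: less_induct)
    case (less n)
    show ?case
    proof (intro allI impI)
      fix R assume H: "K \<subseteq> R \<and> R \<subseteq> V \<and> R \<noteq> V \<and> (\<forall>x\<in>R. (rest R)\<^sup>*\<^sup>* x k0) \<and> card (V - R) = n"
      obtain w' where w': "w' \<in> V" "w' \<notin> R" using H by blast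
      have "E\<^sup>*\<^sup>* k0 w'" using cg k0 KsV w' by (auto simp: connected_graph_def)
      then obtain r w where rw: "E r w" "r \<in> R" "w \<notin> R"
        using crossing[of E k0 w' R] k0 H w' by blast
      have wV: "w \<in> V" using sg rw by (auto simp: simple_graph_def)
      have Ewr: "E w r" using sg rw by (auto simp: simple_graph_def)
      define R' where "R' = insert w R"
      have reach': "\<forall>x\<in>R'. (rest R')\<^sup>*\<^sup>* x k0"
      proof
        fix x assume xR': "x \<in> R'"
        have mono: "(rest R)\<^sup>*\<^sup>* a b \<Longrightarrow> (rest R')\<^sup>*\<^sup>* a b" for a b
          by (rule rtranclp_mono_imp[of "rest R"]) (auto simp: rest_def R'_def)
        show "(rest R')\<^sup>*\<^sup>* x k0"
        proof (cases "x = w")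
          case True
          have "rest R' w r" using Ewr rw by (simp add: rest_def R'_def)
          moreover have "(rest R')\<^sup>*\<^sup>* r k0" using mono H rw by blast
          ultimately show ?thesis using True by (meson converse_rtranclp_into_rtranclp)
        next
          case False
          then have "x \<in> R" using xR' by (simp add: R'_def)
          then show ?thesis using mono H by blast
        qed
      qed
      show "\<exists>v\<in>V - K. \<forall>x\<in>V-{v}. \<forall>y\<in>V-{v}. (delv E v)\<^sup>*\<^sup>* x y"
      proof (cases "R' = V")
        case True
        have "w \<in> V - K" using wV rw H by auto
        moreover have "\<forall>x\<in>V-{w}. \<forall>y\<in>V-{w}. (delv E w)\<^sup>*\<^sup>* x y"
        proof (intro ballI)
          fix x y assume xy: "x \<in> V - {w}" "y \<in> V - {w}"
          then have xyR: "x \<in> R" "y \<in> R" using True R'_def by auto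
          have sub: "(rest R)\<^sup>*\<^sup>* a b \<Longrightarrow> (delv E w)\<^sup>*\<^sup>* a b" for a b
            by (rule rtranclp_mono_imp[of "rest R"]) (use rw in \<open>auto simp: rest_def delv_def\<close>)
          have xk: "(delv E w)\<^sup>*\<^sup>* x k0" using sub H xyR by blast
          have yk: "(delv E w)\<^sup>*\<^sup>* y k0" using sub H xyR by blast
          have symw: "\<forall>a b. delv E w a b \<longrightarrow> delv E w b a" using sg by (auto simp: delv_def simple_graph_def)
          have "(delv E w)\<^sup>*\<^sup>* k0 y" by (rule sym_rtranclp[OF symw yk])
          then show "(delv E w)\<^sup>*\<^sup>* x y" using xk by simp
        qed
        ultimately show ?thesis by blast
      next
        case False
        have "V - R' = (V - R) - {w}" by (auto simp: R'_def)
        moreover have "w \<in> V - R" using wV rw by simp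
        moreover have "finite (V - R)" using finV by simp
        ultimately have "card (V - R') < card (V - R)" by (metis card_Diff1_less)
        then have "card (V - R') < n" using H by simp
        moreover have "K \<subseteq> R' \<and> R' \<subseteq> V \<and> R' \<noteq> V \<and> (\<forall>x\<in>R'. (rest R')\<^sup>*\<^sup>* x k0) \<and> card (V - R') = card (V - R')"
          using H wV False reach' by (auto simp: R'_def)
        ultimately show ?thesis using less.IH by blast
      qed
    qed
  qed
  have "\<forall>x\<in>K. (rest K)\<^sup>*\<^sup>* x k0"
  proof
    fix x assume "x \<in> K"
    show "(rest K)\<^sup>*\<^sup>* x k0"
    proof (cases "x = k0")
      case False
      then have "rest K x k0" using cl \<open>x \<in> K\<close> k0 by (simp add: rest_def clique_def)
      then show ?thesis by simp
    qed simp
  qed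
  then show ?thesis using main[of "card (V - K)"] KsV KV by blast
qed

lemma finite_Fset: "simple_graph V E \<Longrightarrow> finite (Fset V E K)"
proof -
  assume sg: "simple_graph V E"
  have "Fset V E K \<subseteq> Pow V" using sg by (auto simp: Fset_def simple_graph_def)
  moreover have "finite V" using sg by (simp add: simple_graph_def)
  ultimately show ?thesis using finite_subset by blast
qed

lemma finite_holes: "simple_graph V E \<Longrightarrow> finite {S. hole V E S}"
proof -
  assume sg: "simple_graph V E"
  have "{S. hole V E S} \<subseteq> Pow V" by (auto simp: hole_def)
  moreover have "finite V" using sg by (simp add: simple_graph_def)
  ultimately show ?thesis using finite_subset by blast
qed

lemma GC:
  "simple_graph V E \<Longrightarrow> connected_graph V E \<Longrightarrow> holes_edge_disjoint V E \<Longrightarrow> clique V E K \<Longrightarrow> K \<noteq> {}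
   \<Longrightarrow> (\<forall>x y z. E x y \<longrightarrow> E y z \<longrightarrow> E x z \<longrightarrow> x \<in> K)
   \<Longrightarrow> card (Fset V E K) + card K \<le> card V + num_holes V E"
proof (induction "card V" arbitrary: V E rule: less_induct)
  case less
  note sg = less.prems(1) and cg = less.prems(2) and hd = less.prems(3) and cl = less.prems(4)
    and K0 = less.prems(5) and tri = less.prems(6)
  have finV: "finite V" using sg by (simp add: simple_graph_def)
  have KsV: "K \<subseteq> V" using cl by (simp add: clique_def)
  show ?case
  proof (cases "V = K")
    case True
    then have "Fset V E K = {}" using sg by (auto simp: Fset_def simple_graph_def)
    then show ?thesis using True by simp
  next
    case False
    then obtain v where vV: "v \<in> V" "v \<notin> K" and conn: "\<forall>x\<in>V-{v}. \<forall>y\<in>V-{v}. (delv E v)\<^sup>*\<^sup>* x y"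
      using noncut[OF sg cg cl K0] by blast
    define V' where "V' = V - {v}"
    define E' where "E' = delv E v"
    have sg': "simple_graph V' E'" using simple_delv[OF sg] by (simp add: V'_def E'_def)
    have cg': "connected_graph V' E'" using conn K0 KsV vV
      by (auto simp: connected_graph_def V'_def E'_def)
    have hd': "holes_edge_disjoint V' E'"
      using hd unfolding holes_edge_disjoint_def V'_def E'_def
      by (metis hole_delv hole_edges_delv)
    have cl': "clique V' E' K" using cl vV by (auto simp: clique_def V'_def E'_def delv_def)
    have tri': "\<forall>x y z. E' x y \<longrightarrow> E' y z \<longrightarrow> E' x z \<longrightarrow> x \<in> K"
      using tri by (auto simp: E'_def delv_def)
    have cardV': "card V' = card V - 1" using vV finV by (simp add: V'_def)
    have "card V' < card V"
    proof -
      have "card V > 0" using vV finV card_gt_0_iff by blast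
      thus ?thesis using cardV' by linarith
    qed
    then have IH: "card (Fset V' E' K) + card K \<le> card V' + num_holes V' E'"
      using less.hyps sg' cg' hd' cl' K0 tri' by blast
    define N where "N = {u. E v u}"
    have NV: "N \<subseteq> V" using sg by (auto simp: N_def simple_graph_def)
    have finN: "finite N" using NV finV finite_subset by blast
    have vN: "v \<notin> N" using sg_irr[OF sg] by (simp add: N_def)
    have Feq: "Fset V E K = Fset V' E' K \<union> (\<lambda>u. {v,u}) ` N"
    proof
      show "Fset V E K \<subseteq> Fset V' E' K \<union> (\<lambda>u. {v,u}) ` N"
      proof
        fix e assume "e \<in> Fset V E K"
        then obtain x y where e: "e = {x,y}" "E x y" "\<not>(x\<in>K \<and> y\<in>K)" by (auto simp: Fset_def)
        show "e \<in> Fset V' E' K \<union> (\<lambda>u. {v,u}) ` N"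
        proof (cases "x = v \<or> y = v")
          case True
          then show ?thesis
          proof
            assume "x = v" then show ?thesis using e by (auto simp: N_def)
          next
            assume "y = v"
            then have "E v x" using e sg_sym[OF sg] by blast
            then show ?thesis using e \<open>y = v\<close> by (auto simp: N_def)
          qed
        next
          case False
          then have "E' x y" using e by (simp add: E'_def delv_def)
          then show ?thesis using e by (auto simp: Fset_def)
        qed
      qed
    next
      show "Fset V' E' K \<union> (\<lambda>u. {v,u}) ` N \<subseteq> Fset V E K"
        using vV by (auto simp: Fset_def E'_def delv_def N_def)
    qed
    have Fdisj: "Fset V' E' K \<inter> (\<lambda>u. {v,u}) ` N = {}"
    proof -
      have "v \<notin> e" if "e \<in> Fset V' E' K" for e using that by (auto simp: Fset_def E'_def delv_def)
      then show ?thesis by blast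
    qed
    have injN: "inj_on (\<lambda>u. {v,u}) N"
      using vN by (auto simp: inj_on_def doubleton_eq_iff)
    have cardF: "card (Fset V E K) = card (Fset V' E' K) + card N"
    proof -
      have "card (Fset V E K) = card (Fset V' E' K) + card ((\<lambda>u. {v,u}) ` N)"
        unfolding Feq by (rule card_Un_disjoint) (use finite_Fset[OF sg'] finN Fdisj in auto)
      then show ?thesis using card_image[OF injN] by simp
    qed
    define HV where "HV = {S. hole V E S \<and> v \<in> S}"
    have finHV: "finite HV" using finite_holes[OF sg] by (simp add: HV_def)
    have Heq: "{S. hole V E S} = {S. hole V' E' S} \<union> HV"
    proof (rule set_eqI)
      fix S
      show "S \<in> {S. hole V E S} \<longleftrightarrow> S \<in> {S. hole V' E' S} \<union> HV"
        using hole_delv[of V v E S] unfolding HV_def V'_def E'_def by blast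
    qed
    have cardH: "num_holes V E = num_holes V' E' + card HV"
    proof -
      have f1: "finite {S. hole V' E' S}" by (rule finite_holes[OF sg'])
      have disj: "{S. hole V' E' S} \<inter> HV = {}"
        using hole_delv[of V v E] unfolding HV_def V'_def E'_def by blast
      have "card {S. hole V E S} = card {S. hole V' E' S} + card HV"
        unfolding Heq by (rule card_Un_disjoint[OF f1 finHV disj])
      then show ?thesis by (simp add: num_holes_def)
    qed
    have indep: "\<forall>x y. E v x \<longrightarrow> E v y \<longrightarrow> \<not> E x y"
      using tri vV by blast
    have conn': "\<forall>x\<in>V-{v}. \<forall>y\<in>V-{v}. (delv E v)\<^sup>*\<^sup>* x y" using conn .
    have key: "card N \<le> 1 + card HV"
    proof (cases "card N \<le> 1")
      case True then show ?thesis by simp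
    next
      case False
      then obtain a where aN: "a \<in> N" by fastforce
      have "card (N - {a}) \<ge> 1" using False aN finN by simp
      then have B1: "N - {a} \<noteq> {}" by fastforce
      have ABN1: "{a} \<union> (N - {a}) = {u. E v u}" using aN by (auto simp: N_def)
      have disj1: "{a} \<inter> (N - {a}) = {}" by blast
      obtain H1 where H1: "hole V E H1" "v \<in> H1" and "\<exists>a'\<in>{a}. a' \<in> H1" and "\<exists>b\<in>N - {a}. b \<in> H1"
        using hole_through[OF sg vV(1) conn' insert_not_empty B1 disj1 ABN1 indep] by blast
      then have H1a: "a \<in> H1" by simp
      note H1 = H1(1,2) H1a \<open>\<exists>b\<in>N - {a}. b \<in> H1\<close>
      then obtain b where b: "b \<in> N" "b \<noteq> a" "b \<in> H1" by blast
      have "H1 \<in> HV" using H1 by (simp add: HV_def)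
      then have hv1: "card HV \<ge> 1" using finHV by (metis One_nat_def Suc_leI card_gt_0_iff empty_iff)
      show ?thesis
      proof (rule ccontr)
        assume "\<not> ?thesis"
        then have "card N \<ge> 3" using hv1 by linarith
        moreover have "card N = card (N - {a,b}) + 2"
        proof -
          have "card (N - {a,b}) = card N - card {a,b}" using aN b finN by (simp add: card_Diff_subset)
          moreover have "card {a,b} = 2" using b by simp
          moreover have "card {a,b} \<le> card N" using aN b finN by (intro card_mono) auto
          ultimately show ?thesis by simp
        qed
        ultimately have Bne: "N - {a,b} \<noteq> {}" by fastforce
        have ABN2: "{a,b} \<union> (N - {a,b}) = {u. E v u}" using aN b by (auto simp: N_def)
        have disj2: "{a,b} \<inter> (N - {a,b}) = {}" by blast
        obtain H2 where H2: "hole V E H2" "v \<in> H2" "\<exists>x\<in>{a,b}. x \<in> H2" "\<exists>y\<in>N - {a,b}. y \<in> H2"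
          using hole_through[OF sg vV(1) conn' insert_not_empty Bne disj2 ABN2 indep] by blast
        then obtain x y where xy: "x \<in> {a,b}" "x \<in> H2" "y \<in> N" "y \<noteq> a" "y \<noteq> b" "y \<in> H2" by blast
        have "H1 \<noteq> H2"
        proof
          assume "H1 = H2"
          then have "y \<in> H1" using xy by simp
          then show False using hole_three_nbrs[OF H1(1) H1(2) H1(3) b(3) \<open>y \<in> H1\<close>] aN b xy
            by (auto simp: N_def)
        qed
        moreover have "{v,x} \<in> hole_edges E H1" "{v,x} \<in> hole_edges E H2"
          using xy H1 H2 aN b by (auto simp: hole_edges_def N_def)
        ultimately show False using hd H1(1) H2(1) by (auto simp: holes_edge_disjoint_def)
      qed
    qed
    show ?thesis using IH cardF cardH key cardV' \<open>card V' < card V\<close> by linarith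
  qed
qed

theorem theorem2:
  fixes V :: "'a set" and E :: "'a \<Rightarrow> 'a \<Rightarrow> bool"
  assumes "simple_graph V E"
    and "connected_graph V E"
    and "holes_edge_disjoint V E"
    and "card {K. maximal_clique V E K \<and> card K \<ge> 3} \<le> 1"
    and "2 \<le> clique_number V E"
    and "clique_number V E \<le> num_holes V E + 1"
  shows "int (competition_number V E) \<le> int (num_holes V E) - int (clique_number V E) + 3"
proof -
  note sg = assms(1) and cg = assms(2) and hd = assms(3) and mc = assms(4) and w2 = assms(5)
    and wh = assms(6)
  have finV: "finite V" using sg by (simp add: simple_graph_def)
  define CL where "CL = {K. clique V E K}"
  have finCL: "finite CL"
  proof -
    have "CL \<subseteq> Pow V" by (auto simp: CL_def clique_def)
    thus ?thesis using finV finite_subset by blast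
  qed
  have eCL: "{} \<in> CL" by (simp add: CL_def clique_def)
  have om: "clique_number V E = Max (card ` CL)" by (simp add: clique_number_def CL_def)
  have "Max (card ` CL) \<in> card ` CL" using finCL eCL by (intro Max_in) auto
  then obtain K where KCL: "K \<in> CL" and cK: "card K = clique_number V E" using om by auto
  have cl: "clique V E K" using KCL by (simp add: CL_def)
  have cle: "card K' \<le> clique_number V E" if "clique V E K'" for K'
  proof -
    have "card K' \<in> card ` CL" using that by (simp add: CL_def)
    then show ?thesis using finCL om by simp
  qed
  have K0: "K \<noteq> {}" using cK w2 by auto
  have finsub: "finite K'" if "clique V E K'" for K'
    using that finV by (auto simp: clique_def intro: finite_subset)
  have tri: "\<forall>x y z. E x y \<longrightarrow> E y z \<longrightarrow> E x z \<longrightarrow> x \<in> K"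
  proof (intro allI impI)
    fix x y z assume xy: "E x y" and yz: "E y z" and xz: "E x z"
    define T where "T = {x,y,z}"
    have dist: "x \<noteq> y" "y \<noteq> z" "x \<noteq> z" using xy yz xz sg_irr[OF sg] by auto
    have cT: "card T = 3" using dist by (simp add: T_def)
    have clT: "clique V E T" using xy yz xz sg sg_sym[OF sg] by (auto simp: T_def clique_def simple_graph_def)
    have "card T \<le> clique_number V E" using cle clT .
    then have w3: "card K \<ge> 3" using cT cK by simp
    have maxK: "maximal_clique V E K"
    proof -
      have "K' = K" if "clique V E K'" "K \<subseteq> K'" for K'
      proof -
        have "finite K'" using finsub that(1) .
        moreover have "card K' \<le> card K" using cle[OF that(1)] cK by simp
        ultimately show ?thesis using that(2) card_seteq by blast
      qed
      then show ?thesis using cl by (auto simp: maximal_clique_def)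
    qed
    define CT where "CT = {K'. clique V E K' \<and> T \<subseteq> K'}"
    have finCT: "finite CT" using finCL by (rule finite_subset[rotated]) (auto simp: CT_def CL_def)
    have TCT: "T \<in> CT" using clT by (simp add: CT_def)
    have "Max (card ` CT) \<in> card ` CT" using finCT TCT by (intro Max_in) auto
    then obtain M where MCT: "M \<in> CT" and cM: "card M = Max (card ` CT)" by auto
    have Mmax: "card M' \<le> card M" if "M' \<in> CT" for M'
      using that finCT cM by simp
    have clM: "clique V E M" "T \<subseteq> M" using MCT by (auto simp: CT_def)
    have finM: "finite M" using finsub clM(1) .
    have maxM: "maximal_clique V E M"
    proof -
      have "K' = M" if "clique V E K'" "M \<subseteq> K'" for K'
      proof -
        have "K' \<in> CT" using that clM by (auto simp: CT_def)
        then have "card K' \<le> card M" using Mmax by blast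
        moreover have "finite K'" using finsub that(1) .
        ultimately show ?thesis using that(2) card_seteq by blast
      qed
      then show ?thesis using clM by (auto simp: maximal_clique_def)
    qed
    have cM3: "card M \<ge> 3" using card_mono[OF finM clM(2)] cT by simp
    define X where "X = {K. maximal_clique V E K \<and> card K \<ge> 3}"
    have finX: "finite X"
    proof -
      have "X \<subseteq> Pow V" by (auto simp: X_def maximal_clique_def clique_def)
      thus ?thesis using finV finite_subset by blast
    qed
    have "M \<in> X" "K \<in> X" using maxM cM3 maxK w3 by (auto simp: X_def)
    moreover have "card X \<le> Suc 0" using mc by (simp add: X_def)
    ultimately have "M = K" using finX card_le_Suc0_iff_eq by blast
    then show "x \<in> K" using clM by (auto simp: T_def)
  qed
  have GCr: "card (Fset V E K) + card K \<le> card V + num_holes V E" using GC[OF sg cg hd cl K0 tri] .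
  define b where "b = int (num_holes V E) - int (clique_number V E) + 2"
  have b1: "b \<ge> 1" using wh by (simp add: b_def)
  have Fe: "\<forall>e\<in>Fset V E K. \<exists>x y. e = {x,y} \<and> x \<noteq> y \<and> x \<in> V \<and> y \<in> V"
  proof
    fix e assume "e \<in> Fset V E K"
    then obtain x y where xy: "e = {x,y}" "E x y" by (auto simp: Fset_def)
    show "\<exists>x y. e = {x,y} \<and> x \<noteq> y \<and> x \<in> V \<and> y \<in> V"
      by (intro exI[of _ x] exI[of _ y]) (use sg xy in \<open>auto simp: simple_graph_def\<close>)
  qed
  have cF: "int (card (Fset V E K)) \<le> int (card V) + b - 2" using GCr cK by (simp add: b_def)
  obtain r :: "'a \<Rightarrow> nat" and \<sigma> where
    sch: "\<forall>e\<in>Fset V E K. \<forall>u. \<sigma> e = Some u \<longrightarrow> u \<in> V \<and> (\<forall>x\<in>e. r x < r u)"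
    and inj: "\<forall>e\<in>Fset V E K. \<forall>e'\<in>Fset V E K. \<sigma> e = \<sigma> e' \<longrightarrow> \<sigma> e \<noteq> None \<longrightarrow> e = e'"
    and cnt: "int (card {e\<in>Fset V E K. \<sigma> e = None}) \<le> b"
    using scheme_exists[OF finV Fe b1 cF] by blast
  have real: "is_competition_graph_of_acyclic (add_isolated_V V (Suc (card {e\<in>Fset V E K. \<sigma> e = None}))) (add_isolated_E E)"
    by (rule scheme_realize[OF sg cl sch inj])
  have "competition_number V E \<le> Suc (card {e\<in>Fset V E K. \<sigma> e = None})"
    unfolding competition_number_def by (rule Least_le) (rule real)
  then have "int (competition_number V E) \<le> int (card {e\<in>Fset V E K. \<sigma> e = None}) + 1" by linarith
  then show ?thesis using cnt unfolding b_def by linarith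
qed


end
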